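(* Let $X$ and $Y$ be discrete random variables on finite alphabets $\mathcal{X}$ and $\mathcal{Y}$ with joint distribution $P_{XY}$ and marginal $q_Y$. Define, for $\varepsilon\in[\mathsf{P}_{\mathsf{c}}(X),\mathsf{P}_{\mathsf{c}}(X|Y)]$, $$\underline{\mathcal{h}}(\varepsilon)=\sup\{\mathsf{P}_{\mathsf{c}}(Y|Z): P_{Z|Y},\ \mathcal{Z}=\mathcal{Y},\ X - Y - Z,\ \mathsf{P}_{\mathsf{c}}(X|Z)\le\varepsilon\}.$$ If $\mathsf{P}_{\mathsf{c}}(X)<\mathsf{P}_{\mathsf{c}}(X|Y)$, then there exists $\varepsilon_{\mathsf L}\in(\mathsf{P}_{\mathsf{c}}(X),\mathsf{P}_{\mathsf{c}}(X|Y))$ such that $\underline{\mathcal{h}}$ is linear on $[\varepsilon_{\mathsf L},\mathsf{P}_{\mathsf{c}}(X|Y)]$; in particular, for every $\varepsilon\in[\varepsilon_{\mathsf L},\mathsf{P}_{\mathsf{c}}(X|Y)]$, $$\underline{\mathcal{h}}(\varepsilon)=1-(\mathsf{P}_{\mathsf{c}}(X|Y)-\varepsilon)\,\underline{\mathcal{h}}'(\mathsf{P}_{\mathsf{c}}(X|Y)),$$ where $\underline{\mathcal{h}}'(\mathsf{P}_{\mathsf{c}}(X|Y))$ denotes the left derivative of $\underline{\mathcal{h}}$ at $\mathsf{P}_{\mathsf{c}}(X|Y)$. Moreover, if $q_Y(y)>0$ for all $y\in\mathcal{Y}$ and for each $y\in\mathcal{Y}$ there exists a (unique) $x_y\in\mathcal{X}$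 with $P_{X|Y}(x_y|y)>P_{X|Y}(x|y)$ for all $x\ne x_y$, then $$\underline{\mathcal{h}}'(\mathsf{P}_{\mathsf{c}}(X|Y))=\min_{(y,z)\in\mathcal{Y}\times\mathcal{Y}}\frac{q_Y(y)}{P_{XY}(x_y,y)-P_{XY}(x_z,y)},$$ with the convention $\frac{x}{0}=+\infty$ for $x>0$. In addition, if $(y_0,z_0)\in\mathcal{Y}\times\mathcal{Y}$ attains this minimum, then there exists $\varepsilon_{\mathsf L}^{y_0,z_0}<\mathsf{P}_{\mathsf{c}}(X|Y)$ such that the $N$-ary Z-channel $\mathsf{Z}^{y_0,z_0}(\zeta^{y_0,z_0}(\varepsilon))$ achieves $\underline{\mathcal{h}}(\varepsilon)$ for every $\varepsilon\in[\varepsilon_{\mathsf L}^{y_0,z_0},\mathsf{P}_{\mathsf{c}}(X|Y)]$, where $$\zeta^{y_0,z_0}(\varepsilon)=\frac{\mathsf{P}_{\mathsf{c}}(X|Y)-\varepsilon}{P_{XY}(x_{y_0},y_0)-P_{XY}(x_{z_0},y_0)}.$$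
   Context: $\mathsf{P}_{\mathsf{c}}(X)=\max_xP_X(x)$ and $\mathsf{P}_{\mathsf{c}}(X|Z)=\sum_z\max_xP_{XZ}(x,z)$. In the definition of $\underline{\mathcal{h}}$, the channel $P_{Z|Y}$ has output alphabet equal to $\mathcal{Y}$ and $X - Y - Z$ is a Markov chain. For $(y_0,z_0)\in\mathcal{Y}\times\mathcal{Y}$ and $\gamma\in[0,1]$, the $N$-ary Z-channel $\mathsf{Z}^{y_0,z_0}(\gamma)$ (with $N=|\mathcal{Y}|$) is the channel $\mathsf{W}$ with input and output alphabet $\mathcal{Y}$ given by $\mathsf{W}(y|y)=1$ for $y\ne y_0$, $\mathsf{W}(z_0|y_0)=\gamma$, $\mathsf{W}(y_0|y_0)=1-\gamma$. "Achieves $\underline{\mathcal{h}}(\varepsilon)$" means it satisfies the constraint $\mathsf{P}_{\mathsf{c}}(X|Z)\le\varepsilon$ and attains $\mathsf{P}_{\mathsf{c}}(Y|Z)=\underline{\mathcal{h}}(\varepsilon)$. *)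

theory Defs
  imports "HOL-Analysis.Analysis" "HOL-Library.Extended_Real"
begin

text \<open>Joint distribution P x y = P_XY(x,y) on finite alphabets 'a (for X) and 'b (for Y).
  A channel W y z = P_{Z|Y}(z|y) with output alphabet 'b (Z alphabet = Y alphabet).
  The Markov chain X - Y - Z is encoded by P_XZ(x,z) = sum_y P_XY(x,y) W(z|y).\<close>

definition is_pmf2 :: "('a::finite \<Rightarrow> 'b::finite \<Rightarrow> real) \<Rightarrow> bool" where
  "is_pmf2 P \<longleftrightarrow> (\<forall>x y. 0 \<le> P x y) \<and> (\<Sum>x\<in>UNIV. \<Sum>y\<in>UNIV. P x y) = 1"

definition qY :: "('a::finite \<Rightarrow> 'b::finite \<Rightarrow> real) \<Rightarrow> 'b \<Rightarrow> real" where
  "qY P y = (\<Sum>x\<in>UNIV. P x y)"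

definition pc_X :: "('a::finite \<Rightarrow> 'b::finite \<Rightarrow> real) \<Rightarrow> real" where
  "pc_X P = Max (range (\<lambda>x. \<Sum>y\<in>UNIV. P x y))"

definition pc_XgY :: "('a::finite \<Rightarrow> 'b::finite \<Rightarrow> real) \<Rightarrow> real" where
  "pc_XgY P = (\<Sum>y\<in>UNIV. Max (range (\<lambda>x. P x y)))"

definition is_channel :: "('b::finite \<Rightarrow> 'b \<Rightarrow> real) \<Rightarrow> bool" where
  "is_channel W \<longleftrightarrow> (\<forall>y z. 0 \<le> W y z) \<and> (\<forall>y. (\<Sum>z\<in>UNIV. W y z) = 1)"

definition pc_XgZ :: "('a::finite \<Rightarrow> 'b::finite \<Rightarrow> real) \<Rightarrow> ('b \<Rightarrow> 'b \<Rightarrow> real) \<Rightarrow> real" where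
  "pc_XgZ P W = (\<Sum>z\<in>UNIV. Max (range (\<lambda>x. \<Sum>y\<in>UNIV. P x y * W y z)))"

definition pc_YgZ :: "('a::finite \<Rightarrow> 'b::finite \<Rightarrow> real) \<Rightarrow> ('b \<Rightarrow> 'b \<Rightarrow> real) \<Rightarrow> real" where
  "pc_YgZ P W = (\<Sum>z\<in>UNIV. Max (range (\<lambda>y. qY P y * W y z)))"

definition h_low :: "('a::finite \<Rightarrow> 'b::finite \<Rightarrow> real) \<Rightarrow> real \<Rightarrow> real" where
  "h_low P \<epsilon> = Sup {pc_YgZ P W | W. is_channel W \<and> pc_XgZ P W \<le> \<epsilon>}"

definition zchan :: "'b \<Rightarrow> 'b \<Rightarrow> real \<Rightarrow> 'b \<Rightarrow> 'b \<Rightarrow> real" where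
  "zchan y0 z0 \<gamma> y z =
     (if y \<noteq> y0 then (if z = y then 1 else 0)
      else if z = z0 then \<gamma> else if z = y0 then 1 - \<gamma> else 0)"

definition achieves :: "('a::finite \<Rightarrow> 'b::finite \<Rightarrow> real) \<Rightarrow> ('b \<Rightarrow> 'b \<Rightarrow> real) \<Rightarrow> real \<Rightarrow> bool" where
  "achieves P W \<epsilon> \<longleftrightarrow> is_channel W \<and> pc_XgZ P W \<le> \<epsilon> \<and> pc_YgZ P W = h_low P \<epsilon>"

definition ratio :: "('a::finite \<Rightarrow> 'b::finite \<Rightarrow> real) \<Rightarrow> ('b \<Rightarrow> 'a) \<Rightarrow> 'b \<Rightarrow> 'b \<Rightarrow> ereal" where
  "ratio P xs y z =
     (let d = P (xs y) y - P (xs z) y in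
      if d = 0 then \<infinity> else ereal (qY P y / d))"

end

theory Submission imports Defs begin

lemma P_nn: "is_pmf2 P \<Longrightarrow> 0 \<le> P x y" by (simp add: is_pmf2_def)
lemma qY_nn: "is_pmf2 P \<Longrightarrow> 0 \<le> qY P y" unfolding qY_def by (simp add: sum_nonneg P_nn)
lemma P_le_qY: "is_pmf2 P \<Longrightarrow> P x y \<le> qY P y"
  unfolding qY_def by (rule member_le_sum) (auto simp: P_nn)
lemma qY_sum: assumes "is_pmf2 P" shows "(\<Sum>y\<in>UNIV. qY P y) = 1"
proof -
  have "(\<Sum>y\<in>UNIV. qY P y) = (\<Sum>x\<in>UNIV. \<Sum>y\<in>UNIV. P x y)" unfolding qY_def by (rule sum.swap)
  then show ?thesis using assms by (simp add: is_pmf2_def)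
qed
lemma qY_le1: assumes "is_pmf2 P" shows "qY P y \<le> 1"
proof -
  have "qY P y \<le> (\<Sum>y\<in>UNIV. qY P y)" by (rule member_le_sum) (simp_all add: qY_nn[OF assms])
  then show ?thesis using qY_sum[OF assms] by simp
qed
lemma P_le1: "is_pmf2 P \<Longrightarrow> P x y \<le> 1"
  using P_le_qY[of P x y] qY_le1[of P y] by linarith
lemma qY0: assumes "is_pmf2 P" "qY P y = 0" shows "P x y = 0"
proof -
  have "\<forall>x\<in>UNIV. 0 \<le> P x y" using P_nn[OF assms(1)] by blast
  then have "\<forall>x\<in>UNIV. P x y = 0" using sum_nonneg_eq_0_iff[of UNIV "\<lambda>x. P x y"] assms(2)
    unfolding qY_def by simp
  then show ?thesis by simp
qed

definition Pst :: "('a::finite \<Rightarrow> 'b::finite \<Rightarrow> real) \<Rightarrow> 'b \<Rightarrow> real" where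
  "Pst P y = Max (range (\<lambda>x. P x y))"

lemma Pst_ge: "P x y \<le> Pst P y" unfolding Pst_def by (rule Max_ge) auto
lemma Pst_ex: "\<exists>x. P x y = Pst P y"
proof -
  have "Pst P y \<in> range (\<lambda>x. P x y)" unfolding Pst_def by (rule Max_in) auto
  then show ?thesis by auto
qed
lemma Pst_le_qY: assumes "is_pmf2 P" shows "Pst P y \<le> qY P y"
proof -
  obtain x where "P x y = Pst P y" using Pst_ex by blast
  then show ?thesis using P_le_qY[OF assms, of x y] by linarith
qed
lemma Pst_nn: "is_pmf2 P \<Longrightarrow> 0 \<le> Pst P y"
  using Pst_ge[of P undefined y] P_nn[of P undefined y] by linarith
lemma Pst0: assumes "is_pmf2 P" "qY P y = 0" shows "Pst P y = 0"
proof -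
  obtain x where "P x y = Pst P y" using Pst_ex by blast
  then show ?thesis using qY0[OF assms, of x] by simp
qed
lemma c_eq: "pc_XgY P = (\<Sum>y\<in>UNIV. Pst P y)" by (simp add: pc_XgY_def Pst_def)

definition AA :: "('a::finite \<Rightarrow> 'b::finite \<Rightarrow> real) \<Rightarrow> 'b \<Rightarrow> 'a set" where
  "AA P y = {x. P x y = Pst P y}"
definition aa :: "('a::finite \<Rightarrow> 'b::finite \<Rightarrow> real) \<Rightarrow> 'a \<Rightarrow> 'b \<Rightarrow> real" where
  "aa P x y = Pst P y - P x y"
definition TT :: "('a::finite \<Rightarrow> 'b::finite \<Rightarrow> real) \<Rightarrow> 'b \<Rightarrow> ('b \<Rightarrow> real) set" where
  "TT P y' = {v. (\<forall>y. 0 \<le> v y) \<and> v y' = 0 \<and> (\<forall>y. qY P y = 0 \<longrightarrow> v y = 0)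
      \<and> (\<Sum>y\<in>UNIV. qY P y * v y) = 1}"
definition Kf :: "('a::finite \<Rightarrow> 'b::finite \<Rightarrow> real) \<Rightarrow> 'b \<Rightarrow> ('b \<Rightarrow> real) \<Rightarrow> real" where
  "Kf P y' v = Min ((\<lambda>x. \<Sum>y\<in>UNIV. v y * aa P x y) ` AA P y')"
definition KS :: "('a::finite \<Rightarrow> 'b::finite \<Rightarrow> real) \<Rightarrow> real set" where
  "KS P = {Kf P y' v | y' v. v \<in> TT P y'}"
definition MM :: "('a::finite \<Rightarrow> 'b::finite \<Rightarrow> real) \<Rightarrow> real" where
  "MM P = Sup (KS P)"

lemma AA_ne: "AA P y \<noteq> {}" unfolding AA_def using Pst_ex by auto
lemma aa_nn: "0 \<le> aa P x y" unfolding aa_def using Pst_ge by auto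
lemma aa_le: "is_pmf2 P \<Longrightarrow> aa P x y \<le> Pst P y" unfolding aa_def using P_nn by auto
lemma aa_A: "x \<in> AA P y \<Longrightarrow> aa P x y = 0" unfolding aa_def AA_def by auto
lemma aa_q0: "is_pmf2 P \<Longrightarrow> qY P y = 0 \<Longrightarrow> aa P x y = 0" unfolding aa_def using Pst0[of P y] qY0[of P y x] by simp

lemma Kf_le: "x \<in> AA P y' \<Longrightarrow> Kf P y' v \<le> (\<Sum>y\<in>UNIV. v y * aa P x y)"
  unfolding Kf_def by (rule Min_le) auto
lemma Kf_ex: "\<exists>x\<in>AA P y'. Kf P y' v = (\<Sum>y\<in>UNIV. v y * aa P x y)"
proof -
  have "Kf P y' v \<in> (\<lambda>x. \<Sum>y\<in>UNIV. v y * aa P x y) ` AA P y'"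
    unfolding Kf_def by (rule Min_in) (auto simp: AA_ne)
  then show ?thesis by auto
qed

lemma Kf_le1: assumes "is_pmf2 P" "v \<in> TT P y'" shows "Kf P y' v \<le> 1"
proof -
  obtain x where x: "x \<in> AA P y'" using AA_ne by blast
  have "Kf P y' v \<le> (\<Sum>y\<in>UNIV. v y * aa P x y)" by (rule Kf_le[OF x])
  also have "\<dots> \<le> (\<Sum>y\<in>UNIV. qY P y * v y)"
  proof (rule sum_mono)
    fix y
    have "aa P x y \<le> qY P y" using aa_le[OF assms(1), of x y] Pst_le_qY[OF assms(1), of y] by linarith
    moreover have "0 \<le> v y" using assms(2) unfolding TT_def by blast
    ultimately show "v y * aa P x y \<le> qY P y * v y" by (simp add: mult.commute mult_left_mono)
  qed
  finally show ?thesis using assms(2) unfolding TT_def by simp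
qed

lemma KS_bdd: "is_pmf2 P \<Longrightarrow> bdd_above (KS P)"
  unfolding KS_def bdd_above_def using Kf_le1 by blast

lemma KS_le: assumes "is_pmf2 P" "v \<in> TT P y'" shows "Kf P y' v \<le> MM P"
proof -
  have "Kf P y' v \<in> KS P" unfolding KS_def using assms(2) by blast
  then show ?thesis unfolding MM_def by (rule cSup_upper[OF _ KS_bdd[OF assms(1)]])
qed

lemma common_false:
  assumes pmf: "is_pmf2 P" and gap: "pc_X P < pc_XgY P" and h: "\<forall>y. P x y = Pst P y"
  shows False
proof -
  have "pc_XgY P = (\<Sum>y\<in>UNIV. P x y)" using h by (simp add: c_eq)
  also have "\<dots> \<le> pc_X P" unfolding pc_X_def by (rule Max_ge) auto
  finally show False using gap by simp
qed

lemma KS_pos: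
  assumes pmf: "is_pmf2 P" and gap: "pc_X P < pc_XgY P"
  shows "\<exists>y' v. v \<in> TT P y' \<and> 0 < Kf P y' v"
proof -
  fix y' :: 'b
  define S where "S = {y. y \<noteq> y' \<and> 0 < qY P y}"
  define s where "s = (\<Sum>y\<in>S. qY P y)"
  obtain x0 where x0: "x0 \<in> AA P y'" using AA_ne by blast
  show ?thesis
  proof (cases "S = {}")
    case True
    have "\<forall>y. P x0 y = Pst P y"
    proof
      fix y show "P x0 y = Pst P y"
      proof (cases "y = y'")
        case True then show ?thesis using x0 by (simp add: AA_def)
      next
        case False
        then have "qY P y = 0" using \<open>S = {}\<close> qY_nn[OF pmf, of y] unfolding S_def by force
        then show ?thesis using qY0[OF pmf] Pst0[OF pmf] by metis
      qed
    qed
    then show ?thesis using common_false[OF pmf gap] by blast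
  next
    case False
    then have spos: "0 < s" unfolding s_def by (intro sum_pos) (auto simp: S_def)
    define v where "v y = (if y \<in> S then 1 / s else 0)" for y
    have vT: "v \<in> TT P y'"
    proof -
      have "(\<Sum>y\<in>UNIV. qY P y * v y) = (\<Sum>y\<in>S. qY P y / s)"
        unfolding v_def by (simp add: if_distrib sum.If_cases)
      also have "\<dots> = 1" using spos by (simp add: s_def sum_divide_distrib[symmetric])
      finally show ?thesis using spos unfolding TT_def v_def S_def by auto
    qed
    obtain x1 where x1: "x1 \<in> AA P y'" and k: "Kf P y' v = (\<Sum>y\<in>UNIV. v y * aa P x1 y)"
      using Kf_ex by blast
    have "0 < Kf P y' v"
    proof (rule ccontr)
      assume "\<not> 0 < Kf P y' v"
      have nn1: "0 \<le> v y * aa P x1 y" for y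
      proof -
        have "0 \<le> v y" using vT unfolding TT_def by blast
        then show ?thesis using aa_nn[of P x1 y] by simp
      qed
      have nn: "0 \<le> (\<Sum>y\<in>UNIV. v y * aa P x1 y)" by (rule sum_nonneg) (rule nn1)
      then have "(\<Sum>y\<in>UNIV. v y * aa P x1 y) = 0"
        using k \<open>\<not> 0 < Kf P y' v\<close> by linarith
      moreover have nn2: "\<forall>y\<in>UNIV. 0 \<le> v y * aa P x1 y" using nn1 by blast
      ultimately have z: "\<forall>y. v y * aa P x1 y = 0"
        using sum_nonneg_eq_0_iff[of UNIV "\<lambda>y. v y * aa P x1 y"] by simp
      have "\<forall>y. P x1 y = Pst P y"
      proof
        fix y show "P x1 y = Pst P y"
        proof (cases "y \<in> S")
          case True
          then have "v y > 0" using spos by (simp add: v_def)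
          then have "aa P x1 y = 0" using z by (metis mult_eq_0_iff less_irrefl)
          then show ?thesis by (simp add: aa_def)
        next
          case False
          show ?thesis
          proof (cases "y = y'")
            case True then show ?thesis using x1 by (simp add: AA_def)
          next
            case False
            then have "qY P y = 0" using \<open>y \<notin> S\<close> qY_nn[OF pmf, of y] unfolding S_def by force
            then show ?thesis using qY0[OF pmf] Pst0[OF pmf] by metis
          qed
        qed
      qed
      then show False using common_false[OF pmf gap] by blast
    qed
    then show ?thesis using vT by blast
  qed
qed


lemma MM_pos:
  assumes pmf: "is_pmf2 P" and gap: "pc_X P < pc_XgY P"
  shows "0 < MM P"
proof -
  obtain y' v where v: "v \<in> TT P y'" "0 < Kf P y' v" using KS_pos[OF pmf gap] by blast
  have "Kf P y' v \<le> MM P" by (rule KS_le[OF pmf v(1)])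
  then show ?thesis using v(2) by linarith
qed

lemma KS_ne:
  assumes pmf: "is_pmf2 P" and gap: "pc_X P < pc_XgY P"
  shows "KS P \<noteq> {}"
  using KS_pos[OF pmf gap] unfolding KS_def by blast

lemma col_upper:
  assumes pmf: "is_pmf2 P" and w: "\<forall>y. 0 \<le> w y"
  shows "(\<Sum>y\<in>UNIV. w y * Pst P y) - Max (range (\<lambda>x. \<Sum>y\<in>UNIV. P x y * w y))
     \<le> MM P * ((\<Sum>y\<in>UNIV. qY P y * w y) - Max (range (\<lambda>y. qY P y * w y)))"
proof -
  have "Max (range (\<lambda>y. qY P y * w y)) \<in> range (\<lambda>y. qY P y * w y)" by (rule Max_in) auto
  then obtain ys where ys0: "Max (range (\<lambda>y. qY P y * w y)) = qY P ys * w ys" by blast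
  note ys = ys0[symmetric]
  define u where "u y = (if y = ys \<or> qY P y = 0 then 0 else w y)" for y
  define S where "S = (\<Sum>y\<in>UNIV. qY P y * u y)"
  have u_nn: "\<forall>y. 0 \<le> u y" using w by (simp add: u_def)
  have S_eq: "S = (\<Sum>y\<in>UNIV. qY P y * w y) - qY P ys * w ys"
  proof -
    have "\<forall>y. qY P y * w y = qY P y * u y + (if y = ys then qY P ys * w ys else 0)"
      by (auto simp: u_def)
    then have "(\<Sum>y\<in>UNIV. qY P y * w y)
        = (\<Sum>y\<in>UNIV. qY P y * u y + (if y = ys then qY P ys * w ys else 0))" by simp
    also have "\<dots> = S + qY P ys * w ys" by (simp add: sum.distrib S_def)
    finally show ?thesis by simp
  qed
  have key: "(\<Sum>y\<in>UNIV. w y * Pst P y) - Max (range (\<lambda>x. \<Sum>y\<in>UNIV. P x y * w y))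
      \<le> (\<Sum>y\<in>UNIV. u y * aa P x y)" if x: "x \<in> AA P ys" for x
  proof -
    have "(\<Sum>y\<in>UNIV. P x y * w y) \<le> Max (range (\<lambda>x. \<Sum>y\<in>UNIV. P x y * w y))"
      by (rule Max_ge) auto
    moreover have "(\<Sum>y\<in>UNIV. w y * Pst P y) - (\<Sum>y\<in>UNIV. P x y * w y) = (\<Sum>y\<in>UNIV. u y * aa P x y)"
    proof -
      have "w y * Pst P y - P x y * w y = u y * aa P x y" for y
      proof (cases "y = ys")
        case True
        then show ?thesis using x by (simp add: u_def AA_def)
      next
        case False
        show ?thesis
        proof (cases "qY P y = 0")
          case True
          then show ?thesis using Pst0[OF pmf True] qY0[OF pmf True, of x] by (simp add: u_def)
        next
          case False
          then show ?thesis using \<open>y \<noteq> ys\<close> by (simp add: u_def aa_def algebra_simps)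
        qed
      qed
      then show ?thesis by (simp add: sum_subtractf[symmetric])
    qed
    ultimately show ?thesis by linarith
  qed
  have Snn: "0 \<le> S" unfolding S_def using u_nn qY_nn[OF pmf] by (simp add: sum_nonneg)
  have rhs: "(\<Sum>y\<in>UNIV. qY P y * w y) - Max (range (\<lambda>y. qY P y * w y)) = S"
    using S_eq ys by simp
  show ?thesis
  proof (cases "S = 0")
    case True
    have z: "\<forall>y. qY P y * u y = 0"
      using True sum_nonneg_eq_0_iff[of UNIV "\<lambda>y. qY P y * u y"] u_nn qY_nn[OF pmf]
      unfolding S_def by auto
    have u0: "u y = 0" for y
    proof (cases "qY P y = 0")
      case True then show ?thesis by (simp add: u_def)
    next
      case False then show ?thesis using z by auto
    qed
    obtain x where x: "x \<in> AA P ys" using AA_ne by blast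
    show ?thesis using key[OF x] rhs True by (simp add: u0)
  next
    case False
    then have Spos: "0 < S" using Snn by simp
    define v where "v y = u y / S" for y
    have vT: "v \<in> TT P ys"
    proof -
      have "(\<Sum>y\<in>UNIV. qY P y * v y) = (\<Sum>y\<in>UNIV. qY P y * u y) / S"
        by (simp add: v_def sum_divide_distrib)
      also have "\<dots> = 1" using Spos by (simp add: S_def)
      finally show ?thesis using u_nn Spos unfolding TT_def v_def by (auto simp: u_def)
    qed
    obtain x where x: "x \<in> AA P ys" and k: "Kf P ys v = (\<Sum>y\<in>UNIV. v y * aa P x y)"
      using Kf_ex by blast
    have "(\<Sum>y\<in>UNIV. u y * aa P x y) = S * (\<Sum>y\<in>UNIV. v y * aa P x y)"
      using Spos by (simp add: v_def sum_distrib_left)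
    also have "\<dots> \<le> S * MM P" using KS_le[OF pmf vT] k Spos by simp
    finally show ?thesis using key[OF x] rhs by (simp add: mult.commute)
  qed
qed

lemma sum_col_swap:
  assumes "is_channel W"
  shows "(\<Sum>z\<in>UNIV. \<Sum>y\<in>UNIV. f y * W y z) = (\<Sum>y\<in>UNIV. f y)"
proof -
  have "(\<Sum>z\<in>UNIV. \<Sum>y\<in>UNIV. f y * W y z) = (\<Sum>y\<in>UNIV. \<Sum>z\<in>UNIV. f y * W y z)"
    by (rule sum.swap)
  also have "\<dots> = (\<Sum>y\<in>UNIV. f y * (\<Sum>z\<in>UNIV. W y z))" by (simp add: sum_distrib_left)
  also have "\<dots> = (\<Sum>y\<in>UNIV. f y)" using assms by (simp add: is_channel_def)
  finally show ?thesis .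
qed

lemma upper:
  assumes pmf: "is_pmf2 P" and ch: "is_channel W"
  shows "pc_XgY P - pc_XgZ P W \<le> MM P * (1 - pc_YgZ P W)"
proof -
  have c: "pc_XgY P = (\<Sum>z\<in>UNIV. \<Sum>y\<in>UNIV. Pst P y * W y z)"
    using sum_col_swap[OF ch, of "Pst P"] by (simp add: c_eq)
  have one: "(\<Sum>z\<in>UNIV. \<Sum>y\<in>UNIV. qY P y * W y z) = 1"
    using sum_col_swap[OF ch, of "qY P"] qY_sum[OF pmf] by simp
  have "pc_XgY P - pc_XgZ P W = (\<Sum>z\<in>UNIV. (\<Sum>y\<in>UNIV. W y z * Pst P y)
          - Max (range (\<lambda>x. \<Sum>y\<in>UNIV. P x y * W y z)))"
    by (simp add: c pc_XgZ_def sum_subtractf mult.commute)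
  also have "\<dots> \<le> (\<Sum>z\<in>UNIV. MM P * ((\<Sum>y\<in>UNIV. qY P y * W y z) - Max (range (\<lambda>y. qY P y * W y z))))"
    by (rule sum_mono, rule col_upper[OF pmf]) (use ch in \<open>simp add: is_channel_def\<close>)
  also have "\<dots> = MM P * ((\<Sum>z\<in>UNIV. \<Sum>y\<in>UNIV. qY P y * W y z) - pc_YgZ P W)"
    by (simp add: pc_YgZ_def sum_subtractf sum_distrib_left right_diff_distrib)
  also have "\<dots> = MM P * (1 - pc_YgZ P W)" by (simp only: one)
  finally show ?thesis .
qed

definition wch :: "'b \<Rightarrow> ('b \<Rightarrow> real) \<Rightarrow> 'b \<Rightarrow> 'b \<Rightarrow> real" where
  "wch y' u y z = (if z = y' then u y else 0) + (if z = y then 1 - u y else 0)"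

lemma wch_channel:
  assumes "\<forall>y. 0 \<le> u y \<and> u y \<le> 1"
  shows "is_channel (wch y' u)"
  unfolding is_channel_def
proof (intro conjI allI)
  fix y z show "0 \<le> wch y' u y z" using assms[rule_format, of y] by (simp add: wch_def)
next
  fix y show "(\<Sum>z\<in>UNIV. wch y' u y z) = 1" by (simp add: wch_def sum.distrib)
qed

lemma PcY_le1:
  assumes pmf: "is_pmf2 P" and ch: "is_channel W"
  shows "pc_YgZ P W \<le> 1"
proof -
  have "pc_YgZ P W \<le> (\<Sum>z\<in>UNIV. \<Sum>y\<in>UNIV. qY P y * W y z)"
    unfolding pc_YgZ_def
  proof (rule sum_mono)
    fix z
    show "Max (range (\<lambda>y. qY P y * W y z)) \<le> (\<Sum>y\<in>UNIV. qY P y * W y z)"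
    proof (subst Max_le_iff, simp, simp, clarify)
      fix y show "qY P y * W y z \<le> (\<Sum>y\<in>UNIV. qY P y * W y z)"
        by (rule member_le_sum) (use ch qY_nn[OF pmf] in \<open>auto simp: is_channel_def\<close>)
    qed
  qed
  also have "\<dots> = 1" using sum_col_swap[OF ch, of "qY P"] qY_sum[OF pmf] by simp
  finally show ?thesis .
qed

lemma h_ge:
  assumes pmf: "is_pmf2 P" and ch: "is_channel W" and e: "pc_XgZ P W \<le> \<epsilon>"
  shows "pc_YgZ P W \<le> h_low P \<epsilon>"
  unfolding h_low_def
proof (rule cSup_upper)
  show "pc_YgZ P W \<in> {pc_YgZ P W |W. is_channel W \<and> pc_XgZ P W \<le> \<epsilon>}" using ch e by blast
  show "bdd_above {pc_YgZ P W |W. is_channel W \<and> pc_XgZ P W \<le> \<epsilon>}"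
    unfolding bdd_above_def using PcY_le1[OF pmf] by blast
qed

lemma h_le:
  assumes ex: "is_channel W0" "pc_XgZ P W0 \<le> \<epsilon>"
    and b: "\<And>W. is_channel W \<Longrightarrow> pc_XgZ P W \<le> \<epsilon> \<Longrightarrow> pc_YgZ P W \<le> B"
  shows "h_low P \<epsilon> \<le> B"
  unfolding h_low_def
  by (rule cSup_least) (use ex b in auto)

lemma wch_PcY:
  assumes pmf: "is_pmf2 P" and u: "\<forall>y. 0 \<le> u y"
  shows "1 - (\<Sum>y\<in>UNIV. qY P y * u y) \<le> pc_YgZ P (wch y' u)"
proof -
  have "1 - (\<Sum>y\<in>UNIV. qY P y * u y) = (\<Sum>z\<in>UNIV. qY P z * (1 - u z))"
    using qY_sum[OF pmf] by (simp add: right_diff_distrib sum_subtractf)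
  also have "\<dots> \<le> pc_YgZ P (wch y' u)"
    unfolding pc_YgZ_def
  proof (rule sum_mono)
    fix z
    have "qY P z * (1 - u z) \<le> qY P z * wch y' u z z"
      using u qY_nn[OF pmf, of z] by (intro mult_left_mono) (auto simp: wch_def)
    also have "\<dots> \<le> Max (range (\<lambda>y. qY P y * wch y' u y z))" by (rule Max_ge) auto
    finally show "qY P z * (1 - u z) \<le> Max (range (\<lambda>y. qY P y * wch y' u y z))" .
  qed
  finally show ?thesis .
qed

lemma wch_col:
  fixes P :: "'a::finite \<Rightarrow> 'b::finite \<Rightarrow> real"
  shows "(\<Sum>y\<in>UNIV. P x y * wch y' u y z) = (if z = y' then (\<Sum>y\<in>UNIV. P x y * u y) else 0) + P x z * (1 - u z)"
proof -
  have "(\<Sum>y\<in>UNIV. P x y * wch y' u y z)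
     = (\<Sum>y\<in>UNIV. (if z = y' then P x y * u y else 0) + (if y = z then P x z * (1 - u z) else 0))"
    by (rule sum.cong) (auto simp: wch_def distrib_left)
  also have "\<dots> = (\<Sum>y\<in>UNIV. (if z = y' then P x y * u y else 0)) + (\<Sum>y\<in>UNIV. (if y = z then P x z * (1 - u z) else 0))"
    by (rule sum.distrib)
  also have "(\<Sum>y\<in>UNIV. (if y = z then P x z * (1 - u z) else 0)) = P x z * (1 - u z)"
    by (subst sum.delta) auto
  also have "(\<Sum>y\<in>UNIV. (if z = y' then P x y * u y else 0)) = (if z = y' then (\<Sum>y\<in>UNIV. P x y * u y) else 0)"
    by simp
  finally show ?thesis .
qed

lemma wch_PcX:
  assumes pmf: "is_pmf2 P" and u: "\<forall>y. 0 \<le> u y" and u1: "\<forall>y. u y \<le> 1" and uy: "u y' = 0"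
    and hA: "\<forall>x. x \<notin> AA P y' \<longrightarrow> P x y' + (\<Sum>y\<in>UNIV. u y) \<le> Pst P y'"
    and hk: "\<forall>x\<in>AA P y'. k \<le> (\<Sum>y\<in>UNIV. u y * aa P x y)"
  shows "pc_XgZ P (wch y' u) \<le> pc_XgY P - k"
proof -
  obtain x1 where x1: "x1 \<in> AA P y'" using AA_ne by blast
  have "(\<Sum>y\<in>UNIV. u y * aa P x1 y) \<le> (\<Sum>y\<in>UNIV. u y * Pst P y)"
  proof (rule sum_mono)
    fix y show "u y * aa P x1 y \<le> u y * Pst P y"
      using u aa_le[OF pmf, of x1 y] by (simp add: mult_left_mono)
  qed
  then have Cnn: "k \<le> (\<Sum>y\<in>UNIV. u y * Pst P y)" using hk x1 by force
  have col: "Max (range (\<lambda>x. \<Sum>y\<in>UNIV. P x y * wch y' u y z))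
      \<le> Pst P z * (1 - u z) + (if z = y' then (\<Sum>y\<in>UNIV. u y * Pst P y) - k else 0)" for z
  proof (subst Max_le_iff, simp, simp, clarify)
    fix x
    show "(\<Sum>y\<in>UNIV. P x y * wch y' u y z)
      \<le> Pst P z * (1 - u z) + (if z = y' then (\<Sum>y\<in>UNIV. u y * Pst P y) - k else 0)"
    proof (cases "z = y'")
      case False
      have "P x z * (1 - u z) \<le> Pst P z * (1 - u z)"
        by (rule mult_right_mono) (use Pst_ge[of P x z] u1 in auto)
      then show ?thesis using False by (simp add: wch_col)
    next
      case True
      then have e: "(\<Sum>y\<in>UNIV. P x y * wch y' u y z) = (\<Sum>y\<in>UNIV. P x y * u y) + P x y'"
        using uy by (simp add: wch_col)
      show ?thesis
      proof (cases "x \<in> AA P y'")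
        case True
        have "(\<Sum>y\<in>UNIV. u y * aa P x y) = (\<Sum>y\<in>UNIV. u y * Pst P y - P x y * u y)"
          by (rule sum.cong) (auto simp: aa_def algebra_simps)
        also have "\<dots> = (\<Sum>y\<in>UNIV. u y * Pst P y) - (\<Sum>y\<in>UNIV. P x y * u y)"
          by (rule sum_subtractf)
        finally have "k \<le> (\<Sum>y\<in>UNIV. u y * Pst P y) - (\<Sum>y\<in>UNIV. P x y * u y)"
          using hk True by force
        moreover have "P x y' = Pst P y'" using True by (simp add: AA_def)
        ultimately show ?thesis using e \<open>z = y'\<close> uy by simp
      next
        case False
        have "(\<Sum>y\<in>UNIV. P x y * u y) \<le> (\<Sum>y\<in>UNIV. u y)"
        proof (rule sum_mono)
          fix y show "P x y * u y \<le> u y"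
            using mult_left_le_one_le[of "u y" "P x y"] u P_nn[OF pmf] P_le1[OF pmf] by (simp add: mult.commute)
        qed
        then show ?thesis using e \<open>z = y'\<close> uy hA False Cnn by force
      qed
    qed
  qed
  have "pc_XgZ P (wch y' u) \<le> (\<Sum>z\<in>UNIV. Pst P z * (1 - u z)
      + (if z = y' then (\<Sum>y\<in>UNIV. u y * Pst P y) - k else 0))"
    unfolding pc_XgZ_def by (rule sum_mono) (rule col)
  also have "\<dots> = (\<Sum>z\<in>UNIV. Pst P z * (1 - u z)) + ((\<Sum>y\<in>UNIV. u y * Pst P y) - k)"
    by (simp add: sum.distrib)
  also have "(\<Sum>z\<in>UNIV. Pst P z * (1 - u z)) = (\<Sum>z\<in>UNIV. Pst P z - u z * Pst P z)"
    by (rule sum.cong) (auto simp: algebra_simps)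
  also have "\<dots> = pc_XgY P - (\<Sum>z\<in>UNIV. u z * Pst P z)"
    by (simp add: sum_subtractf c_eq)
  finally show ?thesis by simp
qed

theorem theorem3:
  fixes P :: "'a::finite \<Rightarrow> 'b::finite \<Rightarrow> real"
  assumes pmf: "is_pmf2 P"
    and gap: "pc_X P < pc_XgY P"
  shows "\<exists>\<epsilon>L d. pc_X P < \<epsilon>L \<and> \<epsilon>L < pc_XgY P
     \<and> (h_low P has_real_derivative d) (at_left (pc_XgY P))
     \<and> (\<forall>\<epsilon>. \<epsilon>L \<le> \<epsilon> \<and> \<epsilon> \<le> pc_XgY P \<longrightarrow> h_low P \<epsilon> = 1 - (pc_XgY P - \<epsilon>) * d)
     \<and> (\<forall>xs :: 'b \<Rightarrow> 'a.
          (\<forall>y. 0 < qY P y) \<and> (\<forall>y x. x \<noteq> xs y \<longrightarrow> P x y / qY P y < P (xs y) y / qY P y)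
          \<longrightarrow> ereal d = Min (range (\<lambda>(y, z). ratio P xs y z))
            \<and> (\<forall>y0 z0. ratio P xs y0 z0 = Min (range (\<lambda>(y, z). ratio P xs y z)) \<longrightarrow>
                 (\<exists>\<epsilon>L'. pc_X P \<le> \<epsilon>L' \<and> \<epsilon>L' < pc_XgY P \<and>
                    (\<forall>\<epsilon>. \<epsilon>L' \<le> \<epsilon> \<and> \<epsilon> \<le> pc_XgY P \<longrightarrow>
                       achieves P (zchan y0 z0
                          ((pc_XgY P - \<epsilon>) / (P (xs y0) y0 - P (xs z0) y0))) \<epsilon>))))"
proof -
  define c where "c = pc_XgY P"
  define M where "M = MM P"
  have Mpos: "0 < M" using MM_pos[OF pmf gap] by (simp add: M_def)
  define Qp where "Qp = {qY P y | y. 0 < qY P y}"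
  have "Qp \<subseteq> range (qY P)" unfolding Qp_def by blast
  then have Qp_fin: "finite Qp" by (rule finite_subset) simp
  have Qp_ne: "Qp \<noteq> {}"
  proof
    assume e: "Qp = {}"
    have "qY P y = 0" for y
    proof (rule ccontr)
      assume "qY P y \<noteq> 0"
      then have "0 < qY P y" using qY_nn[OF pmf, of y] by simp
      then have "qY P y \<in> Qp" unfolding Qp_def by blast
      then show False using e by simp
    qed
    then show False using qY_sum[OF pmf] by simp
  qed
  define qmin where "qmin = Min Qp"
  have qmin_pos: "0 < qmin"
    using Min_in[OF Qp_fin Qp_ne] unfolding qmin_def Qp_def by auto
  have qmin_le: "qmin \<le> qY P y" if "0 < qY P y" for y
    unfolding qmin_def by (rule Min_le[OF Qp_fin]) (use that in \<open>auto simp: Qp_def\<close>)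
  define N where "N = real (card (UNIV::'b set))"
  have c0: "0 < CARD('b)" by (rule finite_UNIV_card_ge_0) simp
  then have "1 \<le> CARD('b)" by linarith
  then have "real 1 \<le> real CARD('b)" by (rule of_nat_mono)
  then have N1: "1 \<le> N" unfolding N_def by simp
  define Vb where "Vb = N / qmin"
  have Vbpos: "0 < Vb" unfolding Vb_def using N1 qmin_pos by simp
  have vbound: "(\<Sum>y\<in>UNIV. v y) \<le> Vb" if vT: "v \<in> TT P y'" for y' v
  proof -
    have "v y \<le> 1 / qmin" for y
    proof (cases "qY P y = 0")
      case True then show ?thesis using vT qmin_pos unfolding TT_def by simp
    next
      case False
      then have qp: "0 < qY P y" using qY_nn[OF pmf, of y] by simp
      have "qY P y * v y \<le> (\<Sum>y\<in>UNIV. qY P y * v y)"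
        by (rule member_le_sum) (use vT qY_nn[OF pmf] in \<open>auto simp: TT_def\<close>)
      then have a: "qY P y * v y \<le> 1" using vT unfolding TT_def by simp
      have "qmin * v y \<le> qY P y * v y"
        by (rule mult_right_mono) (use qmin_le[OF qp] vT in \<open>auto simp: TT_def\<close>)
      then have "qmin * v y \<le> 1" using a by linarith
      then show ?thesis using qmin_pos by (simp add: field_simps)
    qed
    then have "(\<Sum>y\<in>UNIV. v y) \<le> of_nat (card (UNIV::'b set)) * (1 / qmin)"
      by (intro sum_bounded_above) auto
    then show ?thesis by (simp add: Vb_def N_def)
  qed
  define Dg where "Dg = {Pst P y - P x y | x y. P x y < Pst P y}"
  define \<delta> where "\<delta> = Min (insert 1 Dg)"
  have "Dg \<subseteq> (\<lambda>p. Pst P (snd p) - P (fst p) (snd p)) ` UNIV"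
  proof
    fix d assume "d \<in> Dg"
    then obtain x y where "d = Pst P y - P x y" unfolding Dg_def by blast
    then show "d \<in> (\<lambda>p. Pst P (snd p) - P (fst p) (snd p)) ` UNIV"
      by (intro range_eqI[of _ _ "(x, y)"]) simp
  qed
  then have Dg_fin: "finite Dg" by (rule finite_subset) simp
  have \<delta>pos: "0 < \<delta>" unfolding \<delta>_def using Dg_fin by (subst Min_gr_iff) (auto simp: Dg_def)
  have \<delta>le: "\<delta> \<le> Pst P y - P x y" if "P x y < Pst P y" for x y
    unfolding \<delta>_def by (rule Min_le) (use Dg_fin that in \<open>auto simp: Dg_def\<close>)
  have notA: "P x y + \<delta> \<le> Pst P y" if "x \<notin> AA P y" for x y
  proof -
    have "P x y < Pst P y" using that Pst_ge[of P x y] by (auto simp: AA_def)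
    then show ?thesis using \<delta>le by fastforce
  qed
  define m1 where "m1 = min 1 \<delta>"
  have m1pos: "0 < m1" and m1le1: "m1 \<le> 1" and m1le: "m1 \<le> \<delta>" using \<delta>pos by (auto simp: m1_def)
  define t0 where "t0 = M * m1 / (2 * Vb)"
  have t0pos: "0 < t0" unfolding t0_def using Mpos m1pos Vbpos by simp
  define \<epsilon>L where "\<epsilon>L = max (c - t0) ((pc_X P + c) / 2)"
  have eL1: "pc_X P < \<epsilon>L" using gap unfolding \<epsilon>L_def c_def by (simp add: less_max_iff_disj)
  have eL2: "\<epsilon>L < c" using gap t0pos unfolding \<epsilon>L_def c_def by (simp add: max_less_iff_conj)
  have eL3: "c - t0 \<le> \<epsilon>L" unfolding \<epsilon>L_def by simp

  have low: "is_channel (wch y' (\<lambda>y. (c - \<epsilon>) / Kf P y' v * v y))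
     \<and> pc_XgZ P (wch y' (\<lambda>y. (c - \<epsilon>) / Kf P y' v * v y)) \<le> \<epsilon>
     \<and> 1 - (c - \<epsilon>) / Kf P y' v \<le> pc_YgZ P (wch y' (\<lambda>y. (c - \<epsilon>) / Kf P y' v * v y))"
    if e1: "\<epsilon>L \<le> \<epsilon>" and e2: "\<epsilon> \<le> c" and vT: "v \<in> TT P y'" and vK: "M / 2 \<le> Kf P y' v"
    for \<epsilon> y' v
  proof -
    define K where "K = Kf P y' v"
    define t where "t = c - \<epsilon>"
    define \<gamma> where "\<gamma> = t / K"
    define u where "u y = \<gamma> * v y" for y
    have Kpos: "0 < K" using vK Mpos by (simp add: K_def)
    have t0le: "0 \<le> t" "t \<le> t0" using e1 e2 eL3 by (auto simp: t_def)
    have g0: "0 \<le> \<gamma>" using t0le Kpos by (simp add: \<gamma>_def)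
    have "\<gamma> \<le> t0 / (M / 2)" unfolding \<gamma>_def
      by (rule frac_le) (use t0le t0pos Mpos vK in \<open>auto simp: K_def\<close>)
    also have "t0 / (M / 2) = m1 / Vb" using Mpos Vbpos by (simp add: t0_def field_simps)
    finally have g1: "\<gamma> \<le> m1 / Vb" .
    have vnn: "\<forall>y. 0 \<le> v y" using vT by (simp add: TT_def)
    have su: "(\<Sum>y\<in>UNIV. u y) = \<gamma> * (\<Sum>y\<in>UNIV. v y)" by (simp add: u_def sum_distrib_left)
    have "\<gamma> * (\<Sum>y\<in>UNIV. v y) \<le> (m1 / Vb) * Vb"
      by (rule mult_mono) (use g1 vbound[OF vT] g0 Vbpos vnn in \<open>auto intro: sum_nonneg\<close>)
    then have sum_le: "(\<Sum>y\<in>UNIV. u y) \<le> m1" using su Vbpos by simp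
    have unn: "\<forall>y. 0 \<le> u y" using vnn g0 by (simp add: u_def)
    have u1: "\<forall>y. u y \<le> 1"
    proof
      fix y
      have "u y \<le> (\<Sum>y\<in>UNIV. u y)" by (rule member_le_sum) (use unn in auto)
      then show "u y \<le> 1" using sum_le m1le1 by linarith
    qed
    have uy: "u y' = 0" using vT by (simp add: u_def TT_def)
    have hA: "\<forall>x. x \<notin> AA P y' \<longrightarrow> P x y' + (\<Sum>y\<in>UNIV. u y) \<le> Pst P y'"
      using notA sum_le m1le by fastforce
    have hk: "\<forall>x\<in>AA P y'. t \<le> (\<Sum>y\<in>UNIV. u y * aa P x y)"
    proof
      fix x assume x: "x \<in> AA P y'"
      have "t = \<gamma> * K" using Kpos by (simp add: \<gamma>_def)
      also have "\<dots> \<le> \<gamma> * (\<Sum>y\<in>UNIV. v y * aa P x y)"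
        by (rule mult_left_mono) (use Kf_le[OF x, of v] g0 in \<open>auto simp: K_def\<close>)
      also have "\<dots> = (\<Sum>y\<in>UNIV. u y * aa P x y)" by (simp add: u_def sum_distrib_left mult.assoc)
      finally show "t \<le> (\<Sum>y\<in>UNIV. u y * aa P x y)" .
    qed
    have ch: "is_channel (wch y' u)" using wch_channel unn u1 by blast
    have px: "pc_XgZ P (wch y' u) \<le> \<epsilon>"
      using wch_PcX[OF pmf unn u1 uy hA hk] by (simp add: t_def c_def)
    have "1 - (\<Sum>y\<in>UNIV. qY P y * u y) \<le> pc_YgZ P (wch y' u)" by (rule wch_PcY[OF pmf unn])
    moreover have "(\<Sum>y\<in>UNIV. qY P y * u y) = \<gamma> * (\<Sum>y\<in>UNIV. qY P y * v y)"
      by (simp add: u_def sum_distrib_left algebra_simps)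
    ultimately have py: "1 - \<gamma> \<le> pc_YgZ P (wch y' u)" using vT by (simp add: TT_def)
    have ueq: "(\<lambda>y. (c - \<epsilon>) / Kf P y' v * v y) = u" by (rule ext) (simp add: u_def \<gamma>_def t_def K_def)
    show ?thesis unfolding ueq using ch px py by (simp add: \<gamma>_def t_def K_def)
  qed

  have hlin: "h_low P \<epsilon> = 1 - (c - \<epsilon>) / M" if e1: "\<epsilon>L \<le> \<epsilon>" and e2: "\<epsilon> \<le> c" for \<epsilon>
  proof -
    define t where "t = c - \<epsilon>"
    have lowK: "1 - t / K \<le> h_low P \<epsilon>" if KK1: "K \<in> KS P" and KK2: "M / 2 \<le> K" for K
    proof -
      obtain y' v where vT: "v \<in> TT P y'" and K: "K = Kf P y' v" using KK1 unfolding KS_def by blast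
      have l: "is_channel (wch y' (\<lambda>y. (c - \<epsilon>) / Kf P y' v * v y))
        \<and> pc_XgZ P (wch y' (\<lambda>y. (c - \<epsilon>) / Kf P y' v * v y)) \<le> \<epsilon>
        \<and> 1 - (c - \<epsilon>) / Kf P y' v \<le> pc_YgZ P (wch y' (\<lambda>y. (c - \<epsilon>) / Kf P y' v * v y))"
        using low[OF e1 e2 vT] KK2 K by blast
      have "pc_YgZ P (wch y' (\<lambda>y. (c - \<epsilon>) / Kf P y' v * v y)) \<le> h_low P \<epsilon>"
        using h_ge[OF pmf] l by blast
      then show ?thesis using l unfolding K t_def by linarith
    qed
    have "M / 2 < M" using Mpos by simp
    then have "M / 2 < Sup (KS P)" by (simp add: M_def MM_def)
    then obtain K1 where K1: "K1 \<in> KS P" "M / 2 < K1" using less_cSupD[OF KS_ne[OF pmf gap]] by blast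
    obtain y1 v1 where v1T: "v1 \<in> TT P y1" and K1e: "K1 = Kf P y1 v1" using K1(1) unfolding KS_def by blast
    have wit: "\<exists>W. is_channel W \<and> pc_XgZ P W \<le> \<epsilon>" using low[OF e1 e2 v1T] K1 K1e by auto
    then obtain W0 where W0: "is_channel W0" "pc_XgZ P W0 \<le> \<epsilon>" by blast
    have up: "h_low P \<epsilon> \<le> 1 - t / M"
    proof (rule h_le[OF W0])
      fix W assume W: "is_channel W" "pc_XgZ P W \<le> \<epsilon>"
      have "c - pc_XgZ P W \<le> M * (1 - pc_YgZ P W)" using upper[OF pmf W(1)] by (simp add: c_def M_def)
      then have "t \<le> (1 - pc_YgZ P W) * M" using W(2) by (simp add: t_def algebra_simps)
      then have "t / M \<le> 1 - pc_YgZ P W" using Mpos by (simp add: pos_divide_le_eq)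
      then show "pc_YgZ P W \<le> 1 - t / M" by simp
    qed
    have lo: "1 - t / M \<le> h_low P \<epsilon>"
    proof (rule ccontr)
      assume "\<not> 1 - t / M \<le> h_low P \<epsilon>"
      then have hl: "h_low P \<epsilon> < 1 - t / M" by simp
      have t0: "0 \<le> t" using e2 by (simp add: t_def)
      have t0M: "0 \<le> t / M" using t0 Mpos by simp
      have hp: "0 < 1 - h_low P \<epsilon>" using hl t0M by linarith
      have "t < M * (1 - h_low P \<epsilon>)" using hl Mpos by (simp add: field_simps)
      then have tl: "t / (1 - h_low P \<epsilon>) < M" using hp by (simp add: pos_divide_less_eq)
      define K0 where "K0 = max (M / 2) (t / (1 - h_low P \<epsilon>))"
      have "K0 < M" using tl Mpos by (simp add: K0_def)
      then have "K0 < Sup (KS P)" by (simp add: M_def MM_def)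
      then obtain K where K: "K \<in> KS P" "K0 < K" using less_cSupD[OF KS_ne[OF pmf gap]] by blast
      have Kp: "M / 2 \<le> K" using K(2) by (simp add: K0_def)
      have "t / (1 - h_low P \<epsilon>) < K" using K(2) by (simp add: K0_def)
      then have "t < K * (1 - h_low P \<epsilon>)" using hp by (simp add: pos_divide_less_eq)
      moreover have Kpos: "0 < K" using Kp Mpos by linarith
      ultimately have "t / K < 1 - h_low P \<epsilon>" by (simp add: pos_divide_less_eq mult.commute)
      then show False using lowK[OF K(1) Kp] by linarith
    qed
    show ?thesis using up lo by (simp add: t_def)
  qed

  have deriv: "(h_low P has_real_derivative (1 / M)) (at_left c)"
  proof -
    have "((\<lambda>e. e * (1 / M) + (1 - c / M)) has_real_derivative (1 / M)) (at c)"
      using Mpos by (auto intro!: derivative_eq_intros)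
    then have d1: "((\<lambda>e. e * (1 / M) + (1 - c / M)) has_real_derivative (1 / M)) (at c within {..c})"
      by (rule has_field_derivative_at_within)
    have d2: "(h_low P has_real_derivative (1 / M)) (at c within {..c})"
    proof (rule has_field_derivative_transform_within[OF d1, of "c - \<epsilon>L"])
      show "0 < c - \<epsilon>L" using eL2 by simp
      show "c \<in> {..c}" by simp
      fix x assume x: "x \<in> {..c}" "dist x c < c - \<epsilon>L"
      then have "\<epsilon>L \<le> x" "x \<le> c" by (auto simp: dist_real_def)
      then show "x * (1 / M) + (1 - c / M) = h_low P x"
        using hlin Mpos by (simp add: field_simps)
    qed
    show ?thesis by (rule DERIV_subset[OF d2]) auto
  qed

  have part2: "\<forall>xs :: 'b \<Rightarrow> 'a.
          (\<forall>y. 0 < qY P y) \<and> (\<forall>y x. x \<noteq> xs y \<longrightarrow> P x y / qY P y < P (xs y) y / qY P y)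
          \<longrightarrow> ereal (1 / M) = Min (range (\<lambda>(y, z). ratio P xs y z))
            \<and> (\<forall>y0 z0. ratio P xs y0 z0 = Min (range (\<lambda>(y, z). ratio P xs y z)) \<longrightarrow>
                 (\<exists>\<epsilon>L'. pc_X P \<le> \<epsilon>L' \<and> \<epsilon>L' < c \<and>
                    (\<forall>\<epsilon>. \<epsilon>L' \<le> \<epsilon> \<and> \<epsilon> \<le> c \<longrightarrow>
                       achieves P (zchan y0 z0
                          ((c - \<epsilon>) / (P (xs y0) y0 - P (xs z0) y0))) \<epsilon>)))"
  proof (intro allI impI)
    fix xs :: "'b \<Rightarrow> 'a"
    assume H: "(\<forall>y. 0 < qY P y) \<and> (\<forall>y x. x \<noteq> xs y \<longrightarrow> P x y / qY P y < P (xs y) y / qY P y)"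
    have hq: "0 < qY P y" for y using H by blast
    have hs: "P x y < P (xs y) y" if "x \<noteq> xs y" for x y
      using H that hq[of y] by (auto simp: divide_less_cancel)
    have Pst_xs: "Pst P y = P (xs y) y" for y
    proof -
      obtain x where x: "P x y = Pst P y" using Pst_ex by blast
      show ?thesis
      proof (cases "x = xs y")
        case True then show ?thesis using x by simp
      next
        case False then show ?thesis using hs[OF False] x Pst_ge[of P "xs y" y] by linarith
      qed
    qed
    have AA_xs: "AA P y = {xs y}" for y
      unfolding AA_def using Pst_xs hs by fastforce
    define D where "D y z = P (xs y) y - P (xs z) y" for y z
    have D_nn: "0 \<le> D y z" for y z using Pst_ge[of P "xs z" y] Pst_xs[of y] by (simp add: D_def)
    have aa_xs: "aa P (xs z) y = D y z" for y z by (simp add: aa_def D_def Pst_xs)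
    have Kf_xs: "Kf P z v = (\<Sum>y\<in>UNIV. v y * D y z)" for z v
      using Kf_ex[of P z v] by (auto simp: AA_xs aa_xs)
    have Da: "D y z \<le> M * qY P y" for y z
    proof (cases "y = z")
      case True then show ?thesis using hq[of y] Mpos by (simp add: D_def)
    next
      case False
      define v where "v w = (if w = y then 1 / qY P y else 0)" for w
      have "(\<Sum>w\<in>UNIV. qY P w * v w) = (\<Sum>w\<in>UNIV. if w = y then 1 else 0)"
        by (rule sum.cong) (use hq[of y] in \<open>auto simp: v_def\<close>)
      also have "\<dots> = 1" by simp
      finally have vT: "v \<in> TT P z" using False hq[of y] unfolding TT_def v_def by auto
      have "Kf P z v = (\<Sum>w\<in>UNIV. if w = y then D y z / qY P y else 0)"
        unfolding Kf_xs by (rule sum.cong) (auto simp: v_def)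
      also have "\<dots> = D y z / qY P y" by simp
      finally have "D y z / qY P y \<le> M" using KS_le[OF pmf vT] by (simp add: M_def)
      then show ?thesis using hq[of y] by (simp add: pos_divide_le_eq mult.commute)
    qed
    define R where "R = Max (range (\<lambda>p. D (fst p) (snd p) / qY P (fst p)))"
    have DR: "D y z \<le> R * qY P y" for y z
    proof -
      have "D y z / qY P y \<le> R" unfolding R_def
        by (rule Max_ge) (auto intro: range_eqI[of _ _ "(y, z)"])
      then show ?thesis using hq[of y] by (simp add: pos_divide_le_eq)
    qed
    have MR: "M \<le> R" unfolding M_def MM_def
    proof (rule cSup_least[OF KS_ne[OF pmf gap]])
      fix K assume "K \<in> KS P"
      then obtain z v where vT: "v \<in> TT P z" and K: "K = Kf P z v" unfolding KS_def by blast
      have "(\<Sum>y\<in>UNIV. v y * D y z) \<le> (\<Sum>y\<in>UNIV. v y * (R * qY P y))"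
        by (rule sum_mono, rule mult_left_mono) (use DR vT in \<open>auto simp: TT_def\<close>)
      also have "\<dots> = R * (\<Sum>y\<in>UNIV. qY P y * v y)" by (simp add: sum_distrib_left algebra_simps)
      also have "\<dots> = R" using vT by (simp add: TT_def)
      finally show "K \<le> R" by (simp add: K Kf_xs)
    qed
    have "R \<in> range (\<lambda>p. D (fst p) (snd p) / qY P (fst p))" unfolding R_def by (rule Max_in) auto
    then obtain y1 z1 where R1: "R = D y1 z1 / qY P y1" by auto
    have "R \<le> M" using Da[of y1 z1] hq[of y1] R1 by (simp add: pos_divide_le_eq)
    then have MeqR: "M = R" using MR by simp
    have D1: "D y1 z1 = M * qY P y1" using R1 MeqR hq[of y1] by (simp add: field_simps)
    have rat_ge: "ereal (1 / M) \<le> ratio P xs y z" for y z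
    proof (cases "D y z = 0")
      case True then show ?thesis by (simp add: ratio_def D_def[symmetric])
    next
      case False
      then have Dp: "0 < D y z" using D_nn[of y z] by simp
      have "1 / M \<le> qY P y / D y z"
        using Da[of y z] Dp Mpos by (simp add: field_simps)
      then show ?thesis using False by (simp add: ratio_def D_def[symmetric])
    qed
    have rat1: "ratio P xs y1 z1 = ereal (1 / M)"
    proof -
      have "D y1 z1 \<noteq> 0" using D1 Mpos hq[of y1] by simp
      moreover have "qY P y1 / D y1 z1 = 1 / M" using D1 Mpos hq[of y1] by simp
      ultimately show ?thesis by (simp add: ratio_def D_def[symmetric])
    qed
    have minr: "Min (range (\<lambda>(y, z). ratio P xs y z)) = ereal (1 / M)"
    proof (rule Min_eqI)
      show "finite (range (\<lambda>(y, z). ratio P xs y z))" by simp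
      fix r assume "r \<in> range (\<lambda>(y, z). ratio P xs y z)"
      then show "ereal (1 / M) \<le> r" using rat_ge by auto
    next
      have "(\<lambda>(y, z). ratio P xs y z) (y1, z1) \<in> range (\<lambda>(y, z). ratio P xs y z)" by (rule rangeI)
      then show "ereal (1 / M) \<in> range (\<lambda>(y, z). ratio P xs y z)" using rat1 by simp
    qed
    show "ereal (1 / M) = Min (range (\<lambda>(y, z). ratio P xs y z))
            \<and> (\<forall>y0 z0. ratio P xs y0 z0 = Min (range (\<lambda>(y, z). ratio P xs y z)) \<longrightarrow>
                 (\<exists>\<epsilon>L'. pc_X P \<le> \<epsilon>L' \<and> \<epsilon>L' < c \<and>
                    (\<forall>\<epsilon>. \<epsilon>L' \<le> \<epsilon> \<and> \<epsilon> \<le> c \<longrightarrow>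
                       achieves P (zchan y0 z0
                          ((c - \<epsilon>) / (P (xs y0) y0 - P (xs z0) y0))) \<epsilon>)))"
    proof (intro conjI allI impI)
      show "ereal (1 / M) = Min (range (\<lambda>(y, z). ratio P xs y z))" using minr by simp
      fix y0 z0 assume "ratio P xs y0 z0 = Min (range (\<lambda>(y, z). ratio P xs y z))"
      then have r0: "ratio P xs y0 z0 = ereal (1 / M)" using minr by simp
      have D0ne: "D y0 z0 \<noteq> 0"
      proof
        assume "D y0 z0 = 0"
        then have "ratio P xs y0 z0 = \<infinity>" by (simp add: ratio_def D_def[symmetric])
        then show False using r0 by simp
      qed
      have "qY P y0 / D y0 z0 = 1 / M" using r0 D0ne by (simp add: ratio_def D_def[symmetric])
      then have D0: "D y0 z0 = M * qY P y0" using D0ne Mpos by (simp add: field_simps)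
      have D0pos: "0 < D y0 z0" using D0 Mpos hq[of y0] by simp
      have yz: "y0 \<noteq> z0" using D0ne by (auto simp: D_def)
      show "\<exists>\<epsilon>L'. pc_X P \<le> \<epsilon>L' \<and> \<epsilon>L' < c \<and>
                    (\<forall>\<epsilon>. \<epsilon>L' \<le> \<epsilon> \<and> \<epsilon> \<le> c \<longrightarrow>
                       achieves P (zchan y0 z0 ((c - \<epsilon>) / (P (xs y0) y0 - P (xs z0) y0))) \<epsilon>)"
      proof (intro exI[of _ \<epsilon>L] conjI allI impI)
        show "pc_X P \<le> \<epsilon>L" using eL1 by simp
        show "\<epsilon>L < c" by (rule eL2)
        fix \<epsilon> assume \<epsilon>: "\<epsilon>L \<le> \<epsilon> \<and> \<epsilon> \<le> c"
        define t where "t = c - \<epsilon>"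
        define \<gamma> where "\<gamma> = t / D y0 z0"
        define u where "u y = (if y = y0 then \<gamma> else 0)" for y
        have t0le: "0 \<le> t" "t \<le> t0" using \<epsilon> eL3 by (auto simp: t_def)
        have zc: "zchan y0 z0 ((c - \<epsilon>) / (P (xs y0) y0 - P (xs z0) y0)) = wch z0 u"
          by (intro ext) (auto simp: zchan_def wch_def u_def yz \<gamma>_def t_def D_def)
        have q0: "0 < qY P y0" by (rule hq)
        have g0: "0 \<le> \<gamma>" using t0le D0pos by (simp add: \<gamma>_def)
        have iv: "1 / Vb \<le> qY P y0"
        proof -
          have "1 / Vb = qmin / N" by (simp add: Vb_def)
          also have "\<dots> \<le> qmin" using N1 qmin_pos by (simp add: divide_le_eq)
          also have "\<dots> \<le> qY P y0" by (rule qmin_le[OF q0])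
          finally show ?thesis .
        qed
        have "t0 = (M * m1 / 2) * (1 / Vb)" by (simp add: t0_def)
        also have "\<dots> \<le> (M * m1 / 2) * qY P y0"
          by (rule mult_left_mono[OF iv]) (use Mpos m1pos in simp)
        also have "\<dots> \<le> m1 * D y0 z0" using D0 Mpos m1pos q0 by (simp add: field_simps)
        finally have "t \<le> m1 * D y0 z0" using t0le by linarith
        then have gm: "\<gamma> \<le> m1" using D0pos by (simp add: \<gamma>_def pos_divide_le_eq)
        have unn: "\<forall>y. 0 \<le> u y" using g0 by (simp add: u_def)
        have u1: "\<forall>y. u y \<le> 1" using gm m1le1 by (simp add: u_def)
        have uz: "u z0 = 0" using yz by (simp add: u_def)
        have su: "(\<Sum>y\<in>UNIV. u y) = \<gamma>" by (simp add: u_def)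
        have hA: "\<forall>x. x \<notin> AA P z0 \<longrightarrow> P x z0 + (\<Sum>y\<in>UNIV. u y) \<le> Pst P z0"
          using notA gm m1le su by fastforce
        have sa: "(\<Sum>y\<in>UNIV. u y * aa P (xs z0) y) = \<gamma> * D y0 z0"
        proof -
          have "(\<Sum>y\<in>UNIV. u y * aa P (xs z0) y) = (\<Sum>y\<in>UNIV. if y = y0 then \<gamma> * D y0 z0 else 0)"
            by (rule sum.cong) (auto simp: u_def aa_xs)
          also have "\<dots> = \<gamma> * D y0 z0" by simp
          finally show ?thesis .
        qed
        have hk: "\<forall>x\<in>AA P z0. t \<le> (\<Sum>y\<in>UNIV. u y * aa P x y)"
          using sa D0pos by (simp add: AA_xs \<gamma>_def)
        have ch: "is_channel (wch z0 u)" using wch_channel unn u1 by blast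
        have px: "pc_XgZ P (wch z0 u) \<le> \<epsilon>"
          using wch_PcX[OF pmf unn u1 uz hA hk] by (simp add: t_def c_def)
        have "1 - (\<Sum>y\<in>UNIV. qY P y * u y) \<le> pc_YgZ P (wch z0 u)" by (rule wch_PcY[OF pmf unn])
        moreover have "(\<Sum>y\<in>UNIV. qY P y * u y) = t / M"
        proof -
          have "(\<Sum>y\<in>UNIV. qY P y * u y) = (\<Sum>y\<in>UNIV. if y = y0 then qY P y0 * \<gamma> else 0)"
            by (rule sum.cong) (auto simp: u_def)
          also have "\<dots> = qY P y0 * \<gamma>" by simp
          also have "\<dots> = t / M" using D0 q0 Mpos by (simp add: \<gamma>_def field_simps)
          finally show ?thesis .
        qed
        ultimately have py: "1 - t / M \<le> pc_YgZ P (wch z0 u)" by simp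
        have hv: "h_low P \<epsilon> = 1 - t / M" using hlin \<epsilon> by (simp add: t_def)
        have "pc_YgZ P (wch z0 u) \<le> h_low P \<epsilon>" by (rule h_ge[OF pmf ch px])
        then have "pc_YgZ P (wch z0 u) = h_low P \<epsilon>" using py hv by simp
        then show "achieves P (zchan y0 z0 ((c - \<epsilon>) / (P (xs y0) y0 - P (xs z0) y0))) \<epsilon>"
          unfolding zc achieves_def using ch px by simp
      qed
    qed
  qed

  have lin: "\<forall>\<epsilon>. \<epsilon>L \<le> \<epsilon> \<and> \<epsilon> \<le> c \<longrightarrow> h_low P \<epsilon> = 1 - (c - \<epsilon>) * (1 / M)"
    using hlin by simp
  show ?thesis
    unfolding c_def[symmetric]
    apply (rule exI[of _ \<epsilon>L], rule exI[of _ "1 / M"])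
    using eL1 eL2 deriv lin part2 by blast
qed

end
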